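(* In the standing setting, if $\lim_{t\to T_*}\dot S(t)>0$, then $T_*<\infty$.
   Context: Standing setting: Fix $\lambda\in\mathbb{R}\setminus\{-1\}$ and a nonzero bounded measurable function $\gamma_0:\mathbb{T}^2\to\mathbb{R}$ of zero mean, $\mathbb{T}^2=[0,2\pi)^2$. For $f$ on $\mathbb{T}^2$ let $\langle f\rangle_0=\frac{1}{4\pi^2}\int_{\mathbb{T}^2}f(X_0,Y_0)\,\mathrm{d}X_0\mathrm{d}Y_0$. Let $\gamma_+=\sup\gamma_0>0$, $\gamma_-=\inf\gamma_0<0$. Define $S_*>0$ by $1/S_*=-(\lambda+1)\gamma_+$ if $\lambda<-1$ and $1/S_*=-(\lambda+1)\gamma_-$ if $\lambda>-1$. Let $S(t)$ solve $\dot S=\langle[1+(\lambda+1)\gamma_0(\cdot)S]^{-\frac{1}{\lambda+1}}\rangle_0^{-2(\lambda+1)}$, $S(0)=0$, on the maximal time interval $[0,T_* )$ on which $S(t)<S_*$; $T_*\in(0,\infty]$ is the singularity time. *)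

theory Defs
  imports "HOL-Analysis.Analysis"
begin

definition torus2 :: "(real \<times> real) set" where
  "torus2 = {0..<2*pi} \<times> {0..<2*pi}"

definition mean0 :: "(real \<times> real \<Rightarrow> real) \<Rightarrow> real" where
  "mean0 f = (LINT x:torus2|lborel. f x) / (4 * pi^2)"

definition gamma_plus :: "(real \<times> real \<Rightarrow> real) \<Rightarrow> real" where
  "gamma_plus g = (SUP x\<in>torus2. g x)"

definition gamma_minus :: "(real \<times> real \<Rightarrow> real) \<Rightarrow> real" where
  "gamma_minus g = (INF x\<in>torus2. g x)"

definition Sstar :: "real \<Rightarrow> (real \<times> real \<Rightarrow> real) \<Rightarrow> real" where
  "Sstar lam g = (if lam < -1 then 1 / (-(lam+1) * gamma_plus g)
                  else 1 / (-(lam+1) * gamma_minus g))"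

definition rhsS :: "real \<Rightarrow> (real \<times> real \<Rightarrow> real) \<Rightarrow> real \<Rightarrow> real" where
  "rhsS lam g s =
     (mean0 (\<lambda>x. (1 + (lam+1) * g x * s) powr (-1/(lam+1)))) powr (-2*(lam+1))"

definition is_solution ::
  "real \<Rightarrow> (real \<times> real \<Rightarrow> real) \<Rightarrow> (real \<Rightarrow> real) \<Rightarrow> ereal \<Rightarrow> bool" where
  "is_solution lam g S T \<longleftrightarrow> S 0 = 0 \<and>
     (\<forall>t. 0 \<le> t \<and> ereal t < T \<longrightarrow>
        (S has_real_derivative rhsS lam g (S t)) (at t within {0..}) \<and> S t < Sstar lam g)"

definition approach :: "ereal \<Rightarrow> real filter" where
  "approach T = (if T = \<infinity> then at_top else at_left (real_of_ereal T))"

end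

theory Submission
  imports Defs
begin

theorem lemma4p2:
  fixes lam :: real and g :: "real \<times> real \<Rightarrow> real"
    and S :: "real \<Rightarrow> real" and Tstar :: ereal
  assumes lam: "lam \<noteq> -1"
    and meas: "g \<in> borel_measurable lborel"
    and bdd: "\<exists>B. \<forall>x\<in>torus2. \<bar>g x\<bar> \<le> B"
    and nonzero: "\<exists>x\<in>torus2. g x \<noteq> 0"
    and mean_zero: "mean0 g = 0"
    and Tpos: "0 < Tstar"
    and sol: "is_solution lam g S Tstar"
    and maximal: "\<forall>T' S'. Tstar < T' \<longrightarrow> \<not> is_solution lam g S' T'"
    and lim: "\<exists>L>0. ((\<lambda>t. rhsS lam g (S t)) \<longlongrightarrow> L) (approach Tstar)"
  shows "Tstar < \<infinity>"
proof (rule ccontr)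
  assume "\<not> Tstar < \<infinity>"
  hence T: "Tstar = \<infinity>" by simp
  obtain L where L: "L > 0" "((\<lambda>t. rhsS lam g (S t)) \<longlongrightarrow> L) at_top"
    using lim T by (auto simp: approach_def)
  have "\<forall>\<^sub>F t in at_top. rhsS lam g (S t) > L/2"
    using order_tendstoD(1)[OF L(2), of "L/2"] L(1) by simp
  then obtain N where N: "\<And>t. t \<ge> N \<Longrightarrow> rhsS lam g (S t) > L/2"
    by (auto simp: eventually_at_top_linorder)
  define t0 where "t0 = max N 1"
  have D: "(S has_real_derivative rhsS lam g (S t)) (at t)" if "t > 0" for t
  proof -
    have "(S has_real_derivative rhsS lam g (S t)) (at t within {0..})"
      using sol that T by (auto simp: is_solution_def)
    moreover have "at t within {0..} = at t"
      using that by (intro at_within_interior) simp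
    ultimately show ?thesis by simp
  qed
  have below: "S t < Sstar lam g" if "t \<ge> 0" for t
    using sol that T by (auto simp: is_solution_def)
  have inc: "S t0 - L/2 * t0 \<le> S t - L/2 * t" if "t \<ge> t0" for t
  proof (rule DERIV_nonneg_imp_increasing_open[OF that])
    fix x assume x: "t0 < x" "x < t"
    have "x > 0" using x by (simp add: t0_def)
    have "((\<lambda>t. S t - L/2 * t) has_real_derivative rhsS lam g (S x) - L/2 * 1) (at x)"
      by (rule DERIV_diff[OF D[OF \<open>x > 0\<close>] DERIV_cmult[OF DERIV_ident]])
    moreover have "rhsS lam g (S x) - L/2 * 1 \<ge> 0"
      using N[of x] x by (simp add: t0_def)
    ultimately show "\<exists>y. ((\<lambda>t. S t - L/2 * t) has_real_derivative y) (at x) \<and> 0 \<le> y" by blast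
  next
    have "\<forall>x\<in>{t0..t}. isCont (\<lambda>t. S t - L/2 * t) x"
    proof
      fix x assume "x \<in> {t0..t}"
      hence "x > 0" by (simp add: t0_def)
      show "isCont (\<lambda>t. S t - L/2 * t) x"
        by (intro continuous_intros DERIV_isCont[OF D[OF \<open>x > 0\<close>]])
    qed
    thus "continuous_on {t0..t} (\<lambda>t. S t - L/2 * t)"
      by (rule continuous_at_imp_continuous_on)
  qed
  define t where "t = t0 + 2 * (\<bar>Sstar lam g\<bar> + \<bar>S t0\<bar> + 1) / L"
  have tt: "t \<ge> t0" using L(1) by (simp add: t_def)
  have "S t0 - L/2 * t0 \<le> S t - L/2 * t" using inc[OF tt] .
  moreover have "L/2 * t = L/2*t0 + (\<bar>Sstar lam g\<bar> + \<bar>S t0\<bar> + 1)"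
    using L(1) by (simp add: t_def field_simps)
  moreover have "S t < Sstar lam g" using below tt by (simp add: t0_def)
  ultimately show False by linarith
qed

end
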